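(* Let $G=(V,E)$ be a control flow graph and $p$ a predicate node. If $p$ has at most one successor in $A_p$, then there are no nodes $a,b$ that are DOD on $p$.
   Context: A control flow graph (CFG) is a finite directed graph $G=(V,E)$ in which every node has at most two outgoing edges; nodes with exactly two outgoing edges are predicate nodes. A path from $n_1$ is a nonempty finite or infinite sequence $n_1n_2\ldots$ of nodes with each adjacent pair an edge; it is maximal if it is infinite or its last node has no successor. $V_p$ is the set of nodes occurring on all maximal paths from $p$ in $G$. For $V'\subseteq V$, a $V'$-interval from $x$ to $y$ is a finite path $n_1\ldots n_k$ in $G$ with $k\ge 2$, $n_1=x\in V'$, $n_k=y\in V'$, and $n_i\notin V'$ for $1<i<k$. $A_p$ is the directed graph with node set $V_p$ and an edge $(x,y)$ iff there is a $V_p$-interval from $x$ to $y$ in $G$. For three distinct nodes $p,a,b$ with $p$ a predicate node with successors $s_1,s_2$, the nodes $a,b$ are DOD (decisive order-dependent) on $p$ if all maximal paths from $p$ contain both $a$ and $b$, all maximal paths from $s_1$ contain $a$ before any occurrence of $b$, and all maximal paths from $s_2$ contain $b$ before any occurrence of $a$. *)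

theory Defs
  imports Main
begin

definition succs :: "('v \<times> 'v) set \<Rightarrow> 'v \<Rightarrow> 'v set" where
  "succs E n = {m. (n, m) \<in> E}"

definition cfg :: "'v set \<Rightarrow> ('v \<times> 'v) set \<Rightarrow> bool" where
  "cfg V E \<longleftrightarrow> finite V \<and> E \<subseteq> V \<times> V \<and> (\<forall>n\<in>V. card (succs E n) \<le> 2)"

definition predicate_node :: "'v set \<Rightarrow> ('v \<times> 'v) set \<Rightarrow> 'v \<Rightarrow> bool" where
  "predicate_node V E p \<longleftrightarrow> p \<in> V \<and> card (succs E p) = 2"

definition fpath :: "'v set \<Rightarrow> ('v \<times> 'v) set \<Rightarrow> 'v list \<Rightarrow> bool" where
  "fpath V E xs \<longleftrightarrow> xs \<noteq> [] \<and> set xs \<subseteq> V \<and>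
     (\<forall>i. Suc i < length xs \<longrightarrow> (xs ! i, xs ! Suc i) \<in> E)"

definition ipath :: "'v set \<Rightarrow> ('v \<times> 'v) set \<Rightarrow> (nat \<Rightarrow> 'v) \<Rightarrow> bool" where
  "ipath V E f \<longleftrightarrow> (\<forall>i. f i \<in> V \<and> (f i, f (Suc i)) \<in> E)"

definition max_fpath :: "'v set \<Rightarrow> ('v \<times> 'v) set \<Rightarrow> 'v \<Rightarrow> 'v list \<Rightarrow> bool" where
  "max_fpath V E n xs \<longleftrightarrow> fpath V E xs \<and> hd xs = n \<and> succs E (last xs) = {}"

definition max_ipath :: "'v set \<Rightarrow> ('v \<times> 'v) set \<Rightarrow> 'v \<Rightarrow> (nat \<Rightarrow> 'v) \<Rightarrow> bool" where
  "max_ipath V E n f \<longleftrightarrow> ipath V E f \<and> f 0 = n"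

definition on_all_max_paths :: "'v set \<Rightarrow> ('v \<times> 'v) set \<Rightarrow> 'v \<Rightarrow> 'v \<Rightarrow> bool" where
  "on_all_max_paths V E n x \<longleftrightarrow>
     (\<forall>xs. max_fpath V E n xs \<longrightarrow> x \<in> set xs) \<and>
     (\<forall>f. max_ipath V E n f \<longrightarrow> x \<in> range f)"

definition Vp :: "'v set \<Rightarrow> ('v \<times> 'v) set \<Rightarrow> 'v \<Rightarrow> 'v set" where
  "Vp V E p = {x \<in> V. on_all_max_paths V E p x}"

definition interval :: "'v set \<Rightarrow> ('v \<times> 'v) set \<Rightarrow> 'v set \<Rightarrow> 'v \<Rightarrow> 'v \<Rightarrow> 'v list \<Rightarrow> bool" where
  "interval V E V' x y xs \<longleftrightarrow> fpath V E xs \<and> length xs \<ge> 2 \<and>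
     hd xs = x \<and> last xs = y \<and> x \<in> V' \<and> y \<in> V' \<and>
     (\<forall>i. 0 < i \<and> i < length xs - 1 \<longrightarrow> xs ! i \<notin> V')"

(* edge set of A_p (its node set is Vp V E p) *)
definition Ap_edges :: "'v set \<Rightarrow> ('v \<times> 'v) set \<Rightarrow> 'v \<Rightarrow> ('v \<times> 'v) set" where
  "Ap_edges V E p = {(x, y). x \<in> Vp V E p \<and> y \<in> Vp V E p \<and>
     (\<exists>xs. interval V E (Vp V E p) x y xs)}"

definition a_before_b :: "'v set \<Rightarrow> ('v \<times> 'v) set \<Rightarrow> 'v \<Rightarrow> 'v \<Rightarrow> 'v \<Rightarrow> bool" where
  "a_before_b V E n a b \<longleftrightarrow>
     (\<forall>xs. max_fpath V E n xs \<longrightarrow>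
        (\<exists>i < length xs. xs ! i = a \<and> (\<forall>j\<le>i. xs ! j \<noteq> b))) \<and>
     (\<forall>f. max_ipath V E n f \<longrightarrow>
        (\<exists>i. f i = a \<and> (\<forall>j\<le>i. f j \<noteq> b)))"

definition DOD :: "'v set \<Rightarrow> ('v \<times> 'v) set \<Rightarrow> 'v \<Rightarrow> 'v \<Rightarrow> 'v \<Rightarrow> bool" where
  "DOD V E p a b \<longleftrightarrow> p \<noteq> a \<and> p \<noteq> b \<and> a \<noteq> b \<and> predicate_node V E p \<and>
     on_all_max_paths V E p a \<and> on_all_max_paths V E p b \<and>
     (\<exists>s1 s2. s1 \<noteq> s2 \<and> succs E p = {s1, s2} \<and>
        a_before_b V E s1 a b \<and> a_before_b V E s2 b a)"

end

theory Submission
  imports Defs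
begin

lemma fpath_single[simp]: "fpath V E [x] \<longleftrightarrow> x \<in> V"
  unfolding fpath_def by auto

lemma fpath_Cons2[simp]: "fpath V E (x # y # zs) \<longleftrightarrow> x \<in> V \<and> (x,y) \<in> E \<and> fpath V E (y#zs)"
  unfolding fpath_def
  apply (auto simp: nth_Cons split: nat.splits)
  done

lemma fpath_snoc: "fpath V E xs \<Longrightarrow> (last xs, m) \<in> E \<Longrightarrow> m \<in> V \<Longrightarrow> fpath V E (xs @ [m])"
proof (induction xs)
  case Nil then show ?case by (simp add: fpath_def)
next
  case (Cons x xs)
  then show ?case
    by (cases xs) auto
qed

lemma fpath_app: "fpath V E (xs @ [y]) \<Longrightarrow> fpath V E (y # zs) \<Longrightarrow> fpath V E (xs @ y # zs)"
proof (induction xs)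
  case Nil then show ?case by simp
next
  case (Cons x xs)
  then show ?case
    by (cases xs) auto
qed

lemma fpath_tl: "fpath V E (x # xs) \<Longrightarrow> xs \<noteq> [] \<Longrightarrow> fpath V E xs"
  by (cases xs) auto

lemma fpath_take: "fpath V E L \<Longrightarrow> 0 < n \<Longrightarrow> fpath V E (take n L)"
  unfolding fpath_def by (auto dest: in_set_takeD)

lemma fpath_drop: "fpath V E L \<Longrightarrow> n < length L \<Longrightarrow> fpath V E (drop n L)"
  unfolding fpath_def by (auto dest: in_set_dropD)

lemma fpath_setV: "fpath V E xs \<Longrightarrow> set xs \<subseteq> V"
  unfolding fpath_def by auto

lemma ex_max:
  assumes EV: "E \<subseteq> V \<times> V" and nV: "n \<in> V"
  shows "(\<exists>xs. max_fpath V E n xs) \<or> (\<exists>f. max_ipath V E n f)"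
proof (rule ccontr)
  assume neg: "\<not> ((\<exists>xs. max_fpath V E n xs) \<or> (\<exists>f. max_ipath V E n f))"
  define R where "R = {m. \<exists>xs. fpath V E xs \<and> hd xs = n \<and> last xs = m}"
  have nR: "n \<in> R" unfolding R_def using nV by (intro CollectI exI[of _ "[n]"]) simp
  have RV: "R \<subseteq> V" unfolding R_def using fpath_setV
    by (smt (verit, ccfv_threshold) fpath_def last_in_set mem_Collect_eq subsetI subset_iff)
  have step: "\<exists>m'. m' \<in> R \<and> (m,m') \<in> E" if mR: "m \<in> R" for m
  proof -
    obtain xs where xs: "fpath V E xs" "hd xs = n" "last xs = m" using mR unfolding R_def by auto
    have "succs E m \<noteq> {}" using neg xs unfolding max_fpath_def by auto
    then obtain m' where m': "(m,m') \<in> E" unfolding succs_def by auto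
    then have "m' \<in> V" using EV by auto
    then have "fpath V E (xs @ [m'])" using fpath_snoc xs m' by metis
    moreover have "hd (xs @ [m']) = n" using xs by (simp add: fpath_def)
    ultimately have "m' \<in> R" unfolding R_def by (intro CollectI exI[of _ "xs @ [m']"]) simp
    then show ?thesis using m' by blast
  qed
  define f where "f = rec_nat n (\<lambda>_ m. SOME m'. m' \<in> R \<and> (m,m') \<in> E)"
  have f0: "f 0 = n" unfolding f_def by simp
  have fS: "f (Suc i) = (SOME m'. m' \<in> R \<and> (f i,m') \<in> E)" for i unfolding f_def by simp
  have fR: "f i \<in> R \<and> (f i, f (Suc i)) \<in> E" for i
  proof (induction i)
    case 0
    show ?case unfolding fS using someI_ex[OF step[OF nR]] f0 nR by simp
  next
    case (Suc i)
    then have "f (Suc i) \<in> R" by (metis (mono_tags, lifting) fS someI_ex step)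
    then show ?case using someI_ex[OF step] fS by metis
  qed
  have "max_ipath V E n f" unfolding max_ipath_def ipath_def using fR RV f0 by auto
  then show False using neg by blast
qed

lemma transfer_ab:
  assumes p: "fpath V E (ys @ [y])" and h: "hd (ys @ [y]) = s"
    and ab: "a \<notin> set ys" "b \<notin> set ys"
    and ord: "a_before_b V E s a b"
  shows "a_before_b V E y a b"
  unfolding a_before_b_def
proof (intro conjI allI impI)
  fix Q assume Q: "max_fpath V E y Q"
  then have "Q \<noteq> []" "hd Q = y" "fpath V E Q" unfolding max_fpath_def fpath_def by auto
  then obtain zs where zs: "Q = y # zs" by (cases Q) auto
  have "fpath V E (ys @ Q)" using fpath_app p zs \<open>fpath V E Q\<close> by metis
  moreover have "hd (ys @ Q) = s" using h zs by (cases ys) auto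
  moreover have "succs E (last (ys @ Q)) = {}" using Q zs unfolding max_fpath_def by simp
  ultimately have "max_fpath V E s (ys @ Q)" unfolding max_fpath_def by simp
  then obtain i where i: "i < length (ys @ Q)" "(ys @ Q) ! i = a" "\<forall>j\<le>i. (ys @ Q) ! j \<noteq> b"
    using ord unfolding a_before_b_def by blast
  have "\<not> i < length ys" using i ab by (metis nth_append nth_mem)
  then have "i - length ys < length Q" "Q ! (i - length ys) = a" using i by (auto simp: nth_append)
  moreover have "\<forall>j\<le>i - length ys. Q ! j \<noteq> b"
  proof (intro allI impI)
    fix j assume "j \<le> i - length ys"
    then have "j + length ys \<le> i" using \<open>\<not> i < length ys\<close> by simp
    then have "(ys @ Q) ! (j + length ys) \<noteq> b" using i by blast
    then show "Q ! j \<noteq> b" by (simp add: nth_append)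
  qed
  ultimately show "\<exists>i<length Q. Q ! i = a \<and> (\<forall>j\<le>i. Q ! j \<noteq> b)" by blast
next
  fix f assume f: "max_ipath V E y f"
  define g where "g = (\<lambda>i. if i < length ys then ys ! i else f (i - length ys))"
  have "ipath V E g" unfolding ipath_def
  proof
    fix i
    have fi: "\<forall>i. f i \<in> V \<and> (f i, f (Suc i)) \<in> E" "f 0 = y"
      using f unfolding max_ipath_def ipath_def by auto
    have pv: "set (ys @ [y]) \<subseteq> V" "\<forall>i. Suc i < length (ys @ [y]) \<longrightarrow> ((ys @ [y]) ! i, (ys @ [y]) ! Suc i) \<in> E"
      using p unfolding fpath_def by auto
    show "g i \<in> V \<and> (g i, g (Suc i)) \<in> E"
    proof (cases "Suc i < length ys")
      case True
      then show ?thesis using pv(1) pv(2)[rule_format, of i] unfolding g_def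
        by (auto simp: nth_append)
    next
      case F: False
      show ?thesis
      proof (cases "Suc i = length ys")
        case True
        then show ?thesis using pv(1) pv(2)[rule_format, of i] fi unfolding g_def
          by (auto simp: nth_append)
      next
        case False
        then have "i - length ys + 1 = Suc i - length ys" "\<not> i < length ys" using F by auto
        then show ?thesis using fi unfolding g_def by (metis False F Suc_eq_plus1 less_SucE) 
      qed
    qed
  qed
  moreover have "g 0 = s" using h f unfolding g_def max_ipath_def by (cases ys) auto
  ultimately have "max_ipath V E s g" unfolding max_ipath_def by simp
  then obtain i where i: "g i = a" "\<forall>j\<le>i. g j \<noteq> b"
    using ord unfolding a_before_b_def by blast
  have ni: "\<not> i < length ys" using i ab unfolding g_def by (metis nth_mem)
  then have "f (i - length ys) = a" using i unfolding g_def by simp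
  moreover have "\<forall>j\<le>i - length ys. f j \<noteq> b"
  proof (intro allI impI)
    fix j assume "j \<le> i - length ys"
    then have "j + length ys \<le> i" using ni by simp
    then have "g (j + length ys) \<noteq> b" using i by blast
    then show "f j \<noteq> b" unfolding g_def by simp
  qed
  ultimately show "\<exists>i. f i = a \<and> (\<forall>j\<le>i. f j \<noteq> b)" by blast
qed

lemma find_y:
  assumes L: "fpath V E L" "hd L = p" "L ! 1 = s" "1 \<le> k0" "k0 < length L" "L ! k0 \<in> W"
    and W: "p \<in> W" "a \<in> W" "b \<in> W"
  shows "\<exists>y ys. interval V E W p y (p # ys @ [y]) \<and> fpath V E (ys @ [y]) \<and> hd (ys @ [y]) = s
           \<and> a \<notin> set ys \<and> b \<notin> set ys"
proof -
  define P where "P = (\<lambda>k. 1 \<le> k \<and> k < length L \<and> L ! k \<in> W)"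
  define k where "k = (LEAST k. P k)"
  have Pk: "P k" unfolding k_def using L by (intro LeastI[of P k0]) (auto simp: P_def)
  have mn: "\<not> P j" if "j < k" for j using that unfolding k_def using not_less_Least by blast
  have k1: "1 \<le> k" "k < length L" "L ! k \<in> W" using Pk P_def by auto
  define y where "y = L ! k"
  define ys where "ys = take (k - 1) (drop 1 L)"
  have ysn: "length ys = k - 1" using k1 unfolding ys_def by simp
  have ysi: "ys ! j = L ! Suc j" if "j < k - 1" for j using that k1 unfolding ys_def by simp
  have eq1: "ys @ [y] = take k (drop 1 L)"
  proof -
    obtain m where m: "k = Suc m" using k1 by (cases k) auto
    show ?thesis unfolding ys_def y_def m using k1 m by (simp add: take_Suc_conv_app_nth)
  qed
  have L0: "L = p # drop 1 L" using L(1,2) unfolding fpath_def by (cases L) auto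
  have eq2: "p # ys @ [y] = take (Suc k) L" using L0 eq1 by (metis take_Suc_Cons)
  have fp1: "fpath V E (ys @ [y])" unfolding eq1
    by (rule fpath_take[OF fpath_drop[OF L(1)]]) (use k1 in auto)
  have fp2: "fpath V E (p # ys @ [y])" unfolding eq2 by (rule fpath_take[OF L(1)]) simp
  have hd1: "hd (ys @ [y]) = s" using L(3) k1 unfolding eq1
    by (simp add: hd_take hd_drop_conv_nth)
  have nW: "ys ! j \<notin> W" if "j < length ys" for j
    using mn[of "Suc j"] that ysn ysi[of j] k1 unfolding P_def by auto
  have abn: "a \<notin> set ys" "b \<notin> set ys" using nW W by (auto simp: in_set_conv_nth)
  have "interval V E W p y (p # ys @ [y])"
    unfolding interval_def
  proof (intro conjI allI impI)
    fix i assume "0 < i \<and> i < length (p # ys @ [y]) - 1"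
    then have "i - 1 < length ys" "(p # ys @ [y]) ! i = ys ! (i - 1)"
      by (auto simp: nth_Cons nth_append split: nat.splits)
    then show "(p # ys @ [y]) ! i \<notin> W" using nW by simp
  qed (use fp2 W k1 y_def in auto)
  then show ?thesis using fp1 hd1 abn by blast
qed

lemma path_from_p:
  assumes EV: "E \<subseteq> V \<times> V" and ps: "(p, s) \<in> E" and pV: "p \<in> V"
    and oa: "on_all_max_paths V E p a" and ap: "a \<noteq> p"
  shows "\<exists>L k0. fpath V E L \<and> hd L = p \<and> L ! 1 = s \<and> 1 \<le> k0 \<and> k0 < length L \<and> L ! k0 = a"
proof -
  have sV: "s \<in> V" using ps EV by auto
  from ex_max[OF EV sV] show ?thesis
  proof
    assume "\<exists>xs. max_fpath V E s xs"
    then obtain xs where xs: "max_fpath V E s xs" by blast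
    then obtain zs where zs: "xs = s # zs" unfolding max_fpath_def fpath_def by (cases xs) auto
    have fp: "fpath V E (p # xs)" using xs zs pV ps unfolding max_fpath_def by simp
    have "max_fpath V E p (p # xs)" using fp xs zs unfolding max_fpath_def by simp
    then have "a \<in> set (p # xs)" using oa unfolding on_all_max_paths_def by blast
    then have "a \<in> set xs" using ap by simp
    then obtain j where j: "j < length xs" "xs ! j = a" by (auto simp: in_set_conv_nth)
    show ?thesis
      by (rule exI[of _ "p # xs"], rule exI[of _ "Suc j"]) (use fp j zs in auto)
  next
    assume "\<exists>f. max_ipath V E s f"
    then obtain f where f: "max_ipath V E s f" by blast
    define g where "g = (\<lambda>i. if i = 0 then p else f (i - 1))"
    have "ipath V E g" unfolding ipath_def
    proof (rule allI)
      fix i show "g i \<in> V \<and> (g i, g (Suc i)) \<in> E"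
        using f pV ps unfolding max_ipath_def ipath_def g_def by (cases i) auto
    qed
    then have "max_ipath V E p g" unfolding max_ipath_def by (simp add: g_def)
    then have "a \<in> range g" using oa unfolding on_all_max_paths_def by blast
    then obtain i where i: "g i = a" by blast
    then have i0: "i \<noteq> 0" using ap unfolding g_def by (auto split: if_splits)
    have fp: "fpath V E (map g [0..<Suc i])" unfolding fpath_def
      using \<open>max_ipath V E p g\<close> unfolding max_ipath_def ipath_def
      by (auto simp del: upt_Suc simp: nth_Cons)
    show ?thesis
      apply (rule exI[of _ "map g [0..<Suc i]"], rule exI[of _ i])
      using fp i i0 f unfolding g_def max_ipath_def by (auto simp del: upt_Suc simp: hd_map)
  qed
qed

lemma on_all_inV:
  assumes EV: "E \<subseteq> V \<times> V" and pV: "p \<in> V" and oa: "on_all_max_paths V E p a"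
  shows "a \<in> V"
  using ex_max[OF EV pV]
proof
  assume "\<exists>xs. max_fpath V E p xs"
  then obtain xs where xs: "max_fpath V E p xs" by blast
  then have "a \<in> set xs" using oa unfolding on_all_max_paths_def by blast
  then show ?thesis using xs unfolding max_fpath_def fpath_def by auto
next
  assume "\<exists>f. max_ipath V E p f"
  then obtain f where f: "max_ipath V E p f" by blast
  then have "a \<in> range f" using oa unfolding on_all_max_paths_def by blast
  then show ?thesis using f unfolding max_ipath_def ipath_def by auto
qed

theorem lemma4p5:
  fixes V :: "'v set" and E :: "('v \<times> 'v) set" and p :: 'v
  assumes "cfg V E"
    and "predicate_node V E p"
    and "card {y. (p, y) \<in> Ap_edges V E p} \<le> 1"
  shows "\<not> (\<exists>a b. DOD V E p a b)"
proof
  assume "\<exists>a b. DOD V E p a b"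
  then obtain a b where D: "DOD V E p a b" by blast
  then obtain s1 s2 where S: "s1 \<noteq> s2" "succs E p = {s1, s2}" "a_before_b V E s1 a b" "a_before_b V E s2 b a"
    and ne: "p \<noteq> a" "p \<noteq> b" "a \<noteq> b" and oa: "on_all_max_paths V E p a" and ob: "on_all_max_paths V E p b"
    unfolding DOD_def by blast
  have EV: "E \<subseteq> V \<times> V" and fin: "finite V" using assms(1) unfolding cfg_def by auto
  have pV: "p \<in> V" using assms(2) unfolding predicate_node_def by auto
  define W where "W = Vp V E p"
  have aV: "a \<in> V" by (rule on_all_inV[OF EV pV oa])
  have bV: "b \<in> V" by (rule on_all_inV[OF EV pV ob])
  have pp: "on_all_max_paths V E p p" unfolding on_all_max_paths_def max_fpath_def max_ipath_def
    by (auto simp: fpath_def)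
  have W: "p \<in> W" "a \<in> W" "b \<in> W" unfolding W_def Vp_def using pV aV bV oa ob pp by auto
  have ps: "(p, s1) \<in> E" "(p, s2) \<in> E" using S(2) unfolding succs_def by auto
  have get: "\<exists>y ys. (p, y) \<in> Ap_edges V E p \<and> fpath V E (ys @ [y]) \<and> hd (ys @ [y]) = s
           \<and> a \<notin> set ys \<and> b \<notin> set ys" if psE: "(p, s) \<in> E" for s
  proof -
    obtain L k0 where L: "fpath V E L" "hd L = p" "L ! 1 = s" "1 \<le> k0" "k0 < length L" "L ! k0 = a"
      using path_from_p[OF EV psE pV oa] ne by metis
    obtain y ys where y: "interval V E W p y (p # ys @ [y])" "fpath V E (ys @ [y])" "hd (ys @ [y]) = s"
      "a \<notin> set ys" "b \<notin> set ys"
      using find_y[OF L(1-5) _ W] L(6) W(2) by metis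
    have "y \<in> W" using y(1) unfolding interval_def by auto
    then have "(p, y) \<in> Ap_edges V E p" using y(1) W(1) unfolding Ap_edges_def W_def by auto
    then show ?thesis using y by blast
  qed
  obtain y1 ys1 where Y1: "(p, y1) \<in> Ap_edges V E p" "fpath V E (ys1 @ [y1])" "hd (ys1 @ [y1]) = s1"
           "a \<notin> set ys1" "b \<notin> set ys1" using get[OF ps(1)] by blast
  obtain y2 ys2 where Y2: "(p, y2) \<in> Ap_edges V E p" "fpath V E (ys2 @ [y2])" "hd (ys2 @ [y2]) = s2"
           "a \<notin> set ys2" "b \<notin> set ys2" using get[OF ps(2)] by blast
  have "{y. (p, y) \<in> Ap_edges V E p} \<subseteq> V" unfolding Ap_edges_def Vp_def by auto
  then have "finite {y. (p, y) \<in> Ap_edges V E p}" using fin finite_subset by blast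
  then have "y1 = y2" using assms(3) Y1(1) Y2(1) card_le_Suc0_iff_eq[of "{y. (p, y) \<in> Ap_edges V E p}"]
    by auto
  have o1: "a_before_b V E y1 a b" by (rule transfer_ab[OF Y1(2,3,4,5) S(3)])
  have o2: "a_before_b V E y1 b a" using transfer_ab[OF Y2(2,3,5,4) S(4)] \<open>y1 = y2\<close> by simp
  have y1V: "y1 \<in> V" using Y1(2) unfolding fpath_def by auto
  from ex_max[OF EV y1V] show False
  proof
    assume "\<exists>xs. max_fpath V E y1 xs"
    then obtain Q where Q: "max_fpath V E y1 Q" by blast
    obtain i where i: "Q ! i = a" "\<forall>j\<le>i. Q ! j \<noteq> b" using o1 Q unfolding a_before_b_def by blast
    obtain j where j: "Q ! j = b" "\<forall>k\<le>j. Q ! k \<noteq> a" using o2 Q unfolding a_before_b_def by blast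
    show False using i j by (cases "i \<le> j") auto
  next
    assume "\<exists>f. max_ipath V E y1 f"
    then obtain Q where Q: "max_ipath V E y1 Q" by blast
    obtain i where i: "Q i = a" "\<forall>j\<le>i. Q j \<noteq> b" using o1 Q unfolding a_before_b_def by blast
    obtain j where j: "Q j = b" "\<forall>k\<le>j. Q k \<noteq> a" using o2 Q unfolding a_before_b_def by blast
    show False using i j by (cases "i \<le> j") auto
  qed
qed

end
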